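(* Let $f$ be a probability density on $\mathbb{R}$ with unit second moment which is $g$-concentrated (with error functions $\lambda_n$). Suppose there exist $a_1,a_2,C_1,C_2>0$ with $C_1e^{-a_1v^2}\le f(v)\le C_2e^{a_2v^2}$ for all $v\in\mathbb{R}$. Then the family of conditioned tensorisations $F_N$ of $f$ is log-scalable with constant $$C_F=\max\{|\log C_1|,|\log C_2|\}+\max\{a_1,a_2\}+\sup_{N}\left|\frac{\log\left(2(2\pi)^{-1/2}+2\lambda_N(N)\right)}{N}-\frac{\log N}{2N}-\frac{\log\left(|\mathbb{S}^{N-1}|N^{\frac{N-2}{2}}\right)}{N}\right|,$$ and this supremum is finite.
   Context: $\mathbb{S}^{N-1}(r)$ is the sphere of radius $r$ in $\mathbb{R}^N$ with uniform probability measure $d\sigma^N_r$; $|\mathbb{S}^{n-1}|$ is the surface area of the unit sphere in $\mathbb{R}^n$. For a probability density $f$ on $\mathbb{R}$ with unit second moment, $\mathcal{Z}_N(f,r)=\int_{\mathbb{S}^{N-1}(r)}f^{\otimes N}d\sigma^N_r$ and the conditioned tensorisation is $F_N=f^{\otimes N}/\mathcal{Z}_N(f,\sqrt N)$ (a density w.r.t. $d\sigma^N_{\sqrt N}$). $f$ is $g$-concentrated if $\mathcal{Z}_N$ is well defined and for each fixed $k$, $\mathcal{Z}_{N-k}(f,\sqrt u)=\frac{2}{(N-k)^{1/2}|\mathbb{S}^{N-k-1}|u^{(N-k-2)/2}}\left(g(u-(N-k),N-k)+\lambda_{N-k}(u)\right)$, where $g$ is non-negative and bounded, $g(0,N)=(2\pi)^{-1/2}$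 for all $N$, $\lim_{N\to\infty}\sup_u|\lambda_N(u)|=0$, and for every $R>0$, $\lim_{N\to\infty}\sup_{|x|<R}|g(x,N)-(2\pi)^{-1/2}|=0$. A family $\{F_N\}$ is log-scalable with constant $C_F>0$ (independent of $N$) if $\sup_{\bm v\in\mathbb{S}^{N-1}(\sqrt N)}|\log F_N(\bm v)|\le C_FN$ for all $N$. *)

theory Defs
  imports "HOL-Analysis.Analysis"
begin

text \<open>Points of R^N are functions nat => real, extensional on {..<N}
  (the space of PiM {..<N} (\<lambda>_. lborel)).\<close>

definition RN :: "nat \<Rightarrow> (nat \<Rightarrow> real) measure" where
  "RN N = PiM {..<N} (\<lambda>_. lborel)"

definition eucl_norm :: "nat \<Rightarrow> (nat \<Rightarrow> real) \<Rightarrow> real" where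
  "eucl_norm N x = sqrt (\<Sum>i<N. (x i)\<^sup>2)"

definition sphereN :: "nat \<Rightarrow> real \<Rightarrow> (nat \<Rightarrow> real) set" where
  "sphereN N r = {x \<in> space (RN N). eucl_norm N x = r}"

definition ballN :: "nat \<Rightarrow> real \<Rightarrow> (nat \<Rightarrow> real) set" where
  "ballN N r = {x \<in> space (RN N). eucl_norm N x < r}"

text \<open>Uniform probability measure d sigma^N_r on S^{N-1}(r): the image of the uniform
  (normalised Lebesgue) measure on the ball of radius r under radial projection onto
  the sphere (the cone measure, which is the normalised surface measure).\<close>
definition sphere_measure :: "nat \<Rightarrow> real \<Rightarrow> (nat \<Rightarrow> real) measure" where
  "sphere_measure N r =
     distr (uniform_measure (RN N) (ballN N r)) (RN N)
       (\<lambda>x. restrict (\<lambda>i. r * x i / eucl_norm N x) {..<N})"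

definition sphere_area :: "nat \<Rightarrow> real" where
  "sphere_area n = 2 * pi powr (real n / 2) / Gamma (real n / 2)"

definition tensor :: "nat \<Rightarrow> (real \<Rightarrow> real) \<Rightarrow> (nat \<Rightarrow> real) \<Rightarrow> real" where
  "tensor N f v = (\<Prod>i<N. f (v i))"

definition ZN :: "nat \<Rightarrow> (real \<Rightarrow> real) \<Rightarrow> real \<Rightarrow> real" where
  "ZN N f r = integral\<^sup>L (sphere_measure N r) (tensor N f)"

text \<open>Conditioned tensorisation F_N (density w.r.t. sigma^N_{sqrt N}).\<close>
definition cond_tensor :: "(real \<Rightarrow> real) \<Rightarrow> nat \<Rightarrow> (nat \<Rightarrow> real) \<Rightarrow> real" where
  "cond_tensor f N v = tensor N f v / ZN N f (sqrt (real N))"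

definition prob_density_unit_moment :: "(real \<Rightarrow> real) \<Rightarrow> bool" where
  "prob_density_unit_moment f \<longleftrightarrow>
     f \<in> borel_measurable borel \<and> (\<forall>v. 0 \<le> f v) \<and>
     integrable lborel f \<and> integral\<^sup>L lborel f = 1 \<and>
     integrable lborel (\<lambda>v. v\<^sup>2 * f v) \<and> integral\<^sup>L lborel (\<lambda>v. v\<^sup>2 * f v) = 1"

text \<open>g-concentration with error functions lam.  The requirement "for each fixed k,
  formula for Z_{N-k}" is stated for every dimension n = N - k >= 1 and every u > 0.\<close>
definition g_concentrated ::
  "(real \<Rightarrow> real) \<Rightarrow> (real \<Rightarrow> nat \<Rightarrow> real) \<Rightarrow> (nat \<Rightarrow> real \<Rightarrow> real) \<Rightarrow> bool" where
  "g_concentrated f g lam \<longleftrightarrow>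
     (\<forall>N\<ge>1. \<forall>r>0. integrable (sphere_measure N r) (tensor N f)) \<and>
     (\<forall>n\<ge>1. \<forall>u>0. ZN n f (sqrt u) =
         2 / (sqrt (real n) * sphere_area n * u powr ((real n - 2) / 2))
           * (g (u - real n) n + lam n u)) \<and>
     (\<forall>x n. 0 \<le> g x n) \<and> (\<exists>B. \<forall>x n. g x n \<le> B) \<and>
     (\<forall>n. g 0 n = 1 / sqrt (2 * pi)) \<and>
     (\<forall>\<epsilon>>0. \<exists>N0. \<forall>n\<ge>N0. \<forall>u>0. \<bar>lam n u\<bar> \<le> \<epsilon>) \<and>
     (\<forall>R>0. \<forall>\<epsilon>>0. \<exists>N0. \<forall>n\<ge>N0. \<forall>x. \<bar>x\<bar> < R \<longrightarrow> \<bar>g x n - 1 / sqrt (2 * pi)\<bar> \<le> \<epsilon>)"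

definition log_scalable :: "(nat \<Rightarrow> (nat \<Rightarrow> real) \<Rightarrow> real) \<Rightarrow> real \<Rightarrow> bool" where
  "log_scalable F C \<longleftrightarrow> C > 0 \<and>
     (\<forall>N\<ge>1. \<forall>v\<in>sphereN N (sqrt (real N)). \<bar>ln (F N v)\<bar> \<le> C * real N)"

end

theory Submission
  imports Defs
begin

lemma Gamma_step: "x > (0::real) \<Longrightarrow> Gamma (x + 1) = x * Gamma x"
  by (rule Gamma_plus1) (auto elim!: nonpos_Ints_cases)

lemma lnGamma_bounds:
  fixes n :: nat assumes "n \<ge> 1"
  shows "ln (Gamma (real n / 2)) \<le> ln 2 + (real n / 2) * ln (real n) \<and>
         ln (Gamma (real n / 2)) \<ge> - ln 2 + ((real n - 2) / 2) * (ln (real n) - ln 6)"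
  using assms
proof (induction n rule: less_induct)
  case (less n)
  show ?case
  proof (cases "n \<le> 2")
    case True
    then have "n = 1 \<or> n = 2" using less.prems by auto
    then show ?thesis
    proof
      assume n: "n = 1"
      have g: "Gamma (real n / 2) = sqrt pi" using n Gamma_one_half_real by simp
      have "sqrt pi \<le> 2" using pi_less_4 real_sqrt_le_iff[of pi 4] by (simp add: real_sqrt_four)
      hence u: "ln (sqrt pi) \<le> ln 2" by simp
      have "sqrt 6 / 2 \<le> sqrt pi"
      proof -
        have "sqrt 6 / 2 = sqrt (6/4)" by (simp only: real_sqrt_divide real_sqrt_four)
        also have "\<dots> \<le> sqrt pi" using pi_gt3 by simp
        finally show ?thesis .
      qed
      hence "ln (sqrt 6 / 2) \<le> ln (sqrt pi)" by (simp)
      hence "ln 6 / 2 - ln 2 \<le> ln (sqrt pi)" by (simp add: ln_div ln_sqrt)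
      then show ?thesis using g u n by simp
    next
      assume n: "n = 2"
      then show ?thesis by simp
    qed
  next
    case False
    define m where "m = n - 2"
    have m: "n = m + 2" "m \<ge> 1" using False m_def by auto
    have IH: "ln (Gamma (real m / 2)) \<le> ln 2 + (real m / 2) * ln (real m) \<and>
         ln (Gamma (real m / 2)) \<ge> - ln 2 + ((real m - 2) / 2) * (ln (real m) - ln 6)"
      using less.IH[of m] m by auto
    have mpos: "real m > 0" using m by simp
    have "Gamma (real n / 2) = Gamma (real m / 2 + 1)" using m by (simp add: field_simps)
    also have "\<dots> = (real m / 2) * Gamma (real m / 2)" using mpos by (simp add: Gamma_step)
    finally have ge0: "Gamma (real n / 2) = (real m / 2) * Gamma (real m / 2)" .
    have gp: "Gamma (real m / 2) > 0" using mpos by simp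
    have ge: "ln (Gamma (real n / 2)) = ln (real m / 2) + ln (Gamma (real m / 2))"
      unfolding ge0 using mpos gp by (intro ln_mult_pos) auto
    have lnm2: "ln (real m / 2) = ln (real m) - ln 2" using mpos by (simp add: ln_div)
    have lmn: "ln (real m) \<le> ln (real n)" using m mpos by simp
    have l2: "ln (real m) \<ge> 0" using m by simp
    have e1: "real n / 2 * ln (real n) = real m / 2 * ln (real n) + ln (real n)"
      using m by (simp add: field_simps)
    have e2: "(real n - 2) / 2 * (ln (real n) - ln 6) = real m / 2 * ln (real n) - real m / 2 * ln 6"
      using m by (simp add: field_simps)
    have e3: "(real m - 2) / 2 * (ln (real m) - ln 6) = real m / 2 * ln (real m) - ln (real m) - real m / 2 * ln 6 + ln 6"
      by (simp add: field_simps)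
    have e4: "real m / 2 * (ln (real n) - ln (real m)) = real m / 2 * ln (real n) - real m / 2 * ln (real m)"
      by (simp add: field_simps)
    have mm: "(real m / 2) * ln (real m) \<le> (real m / 2) * ln (real n)"
      using lmn mpos by (intro mult_left_mono) auto
    have l2': "ln (2::real) \<ge> 0" by simp
    have up: "ln (Gamma (real n / 2)) \<le> ln 2 + (real n / 2) * ln (real n)"
      using ge lnm2 IH mm lmn l2' e1 by linarith
    have key: "(real m / 2) * (ln (real n) - ln (real m)) \<le> 1"
    proof -
      have "1 + 2 / real m = real n / real m" using m mpos by (simp add: field_simps)
      hence "ln (real n) - ln (real m) = ln (1 + 2 / real m)"
        using m mpos by (simp add: ln_divide_pos)
      also have "\<dots> \<le> 2 / real m" by (rule ln_add_one_self_le_self) simp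
      finally show ?thesis using mpos by (simp add: field_simps)
    qed
    have "(1::real) \<le> ln 3"
    proof -
      have "exp (1::real) \<le> 3" using exp_le by simp
      then show ?thesis by (simp add: ln_ge_iff)
    qed
    have l6: "ln (6::real) = ln 2 + ln 3" using ln_mult[of 2 3] by simp
    have lo: "ln (Gamma (real n / 2)) \<ge> - ln 2 + ((real n - 2) / 2) * (ln (real n) - ln 6)"
      using ge lnm2 IH key \<open>1 \<le> ln 3\<close> l6 e2 e3 e4 by linarith
    show ?thesis using up lo by simp
  qed
qed


lemma area_bound:
  fixes n :: nat assumes "n \<ge> 1"
  shows "\<bar>ln (sphere_area n * real n powr ((real n - 2) / 2))\<bar> \<le> 6 * real n"
proof -
  have np: "real n > 0" using assms by simp
  have Gp: "Gamma (real n / 2) > 0" using np by simp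
  have pp: "pi powr (real n / 2) > 0" by simp
  have npp: "real n powr ((real n - 2) / 2) > 0" using np by simp
  have "ln (sphere_area n * real n powr ((real n - 2) / 2))
      = ln 2 + (real n / 2) * ln pi - ln (Gamma (real n / 2)) + ((real n - 2) / 2) * ln (real n)"
    unfolding sphere_area_def using Gp pp npp np
    by (simp add: ln_mult_pos ln_divide_pos)
  moreover note B = lnGamma_bounds[OF assms]
  moreover have "ln (2::real) \<le> 1" using ln_le_minus_one[of 2] by simp
  moreover have "ln pi \<le> 3" using ln_le_minus_one[of pi] pi_less_4 by simp
  moreover have "ln pi \<ge> 0" using pi_ge_two by simp
  moreover have l6: "ln (6::real) \<le> 5" "ln (6::real) \<ge> 0" using ln_le_minus_one[of 6] by simp_all
  moreover have "ln (real n) \<le> real n" using ln_le_minus_one[of "real n"] np by simp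
  moreover have "ln (real n) \<ge> 0" using assms by simp
  moreover have "(real n / 2) * ln pi \<le> (real n / 2) * 3"
    using \<open>ln pi \<le> 3\<close> np by (intro mult_left_mono) auto
  moreover have "(real n / 2) * ln pi \<ge> 0" using \<open>ln pi \<ge> 0\<close> np by simp
  moreover have "((real n - 2) / 2) * ln 6 \<le> (real n / 2) * 5"
  proof -
    have "((real n - 2) / 2) * ln 6 \<le> (real n / 2) * ln 6" using l6 by (intro mult_right_mono) auto
    also have "\<dots> \<le> (real n / 2) * 5" using l6 np by (intro mult_left_mono) auto
    finally show ?thesis .
  qed
  moreover have "((real n - 2) / 2) * (ln (real n) - ln 6) = ((real n - 2) / 2) * ln (real n) - ((real n - 2) / 2) * ln 6"
    by (rule right_diff_distrib)
  moreover have "((real n - 2) / 2) * ln (real n) = (real n / 2) * ln (real n) - ln (real n)"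
    by (simp add: diff_divide_distrib left_diff_distrib)
  moreover have "real n \<ge> 1" using assms by simp
  ultimately show ?thesis by linarith
qed


theorem theorem3p4:
  fixes f :: "real \<Rightarrow> real" and g :: "real \<Rightarrow> nat \<Rightarrow> real"
    and lam :: "nat \<Rightarrow> real \<Rightarrow> real" and a1 a2 C1 C2 :: real
  assumes "prob_density_unit_moment f"
    and "g_concentrated f g lam"
    and "a1 > 0" "a2 > 0" "C1 > 0" "C2 > 0"
    and "\<forall>v. C1 * exp (- a1 * v\<^sup>2) \<le> f v \<and> f v \<le> C2 * exp (a2 * v\<^sup>2)"
  defines "S \<equiv> {\<bar>ln (2 * (1 / sqrt (2 * pi)) + 2 * lam N (real N)) / real N
                  - ln (real N) / (2 * real N)
                  - ln (sphere_area N * real N powr ((real N - 2) / 2)) / real N\<bar> | N. N \<ge> 1}"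
  shows "bdd_above S \<and>
         log_scalable (cond_tensor f)
           (max \<bar>ln C1\<bar> \<bar>ln C2\<bar> + max a1 a2 + Sup S)"
proof -
  define c :: real where "c = 1 / sqrt (2 * pi)"
  have cpos: "c > 0" unfolding c_def by simp
  define s where "s N = \<bar>ln (2 * (1 / sqrt (2 * pi)) + 2 * lam N (real N)) / real N
                  - ln (real N) / (2 * real N)
                  - ln (sphere_area N * real N powr ((real N - 2) / 2)) / real N\<bar>" for N :: nat
  have Seq: "S = s ` {N. N \<ge> 1}" unfolding S_def s_def by auto
  have gc: "\<forall>n\<ge>1. \<forall>u>0. ZN n f (sqrt u) =
         2 / (sqrt (real n) * sphere_area n * u powr ((real n - 2) / 2))
           * (g (u - real n) n + lam n u)"
    "\<forall>n. g 0 n = 1 / sqrt (2 * pi)"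
    "\<forall>\<epsilon>>0. \<exists>N0. \<forall>n\<ge>N0. \<forall>u>0. \<bar>lam n u\<bar> \<le> \<epsilon>"
    using assms(2) unfolding g_concentrated_def by auto
  obtain N0 where N0: "\<forall>n\<ge>N0. \<forall>u>0. \<bar>lam n u\<bar> \<le> c / 2"
    using gc(3) cpos by (meson half_gt_zero)
  define A where "A n = \<bar>ln (2 * c + 2 * lam n (real n)) / real n\<bar>" for n :: nat
  define K1 where "K1 = \<bar>ln c\<bar> + \<bar>ln (3 * c)\<bar>"
  define M where "M = K1 + (\<Sum>n<N0. A n) + 1/2 + 6"
  have sbound: "s N \<le> M" if N: "N \<ge> 1" for N
  proof -
    have Np: "real N \<ge> 1" using N by simp
    have AN: "A N \<le> K1 + (\<Sum>n<N0. A n)"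
    proof (cases "N < N0")
      case True
      have "A N \<le> (\<Sum>n<N0. A n)"
        using True by (intro member_le_sum) (auto simp: A_def)
      moreover have "K1 \<ge> 0" unfolding K1_def by simp
      ultimately show ?thesis by linarith
    next
      case False
      have l: "\<bar>lam N (real N)\<bar> \<le> c / 2" using N0 False Np by auto
      have lo: "c \<le> 2 * c + 2 * lam N (real N)" and hi: "2 * c + 2 * lam N (real N) \<le> 3 * c"
        using l by (auto simp: abs_le_iff)
      have "ln c \<le> ln (2 * c + 2 * lam N (real N))" using lo cpos by simp
      moreover have "ln (2 * c + 2 * lam N (real N)) \<le> ln (3 * c)" using lo hi cpos by simp
      ultimately have "\<bar>ln (2 * c + 2 * lam N (real N))\<bar> \<le> K1" unfolding K1_def by linarith
      moreover have "A N \<le> \<bar>ln (2 * c + 2 * lam N (real N))\<bar>"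
        unfolding A_def using Np mult_left_mono[of 1 "real N" "\<bar>ln (2 * c + 2 * lam N (real N))\<bar>"]
        by (simp add: abs_div divide_le_eq)
      moreover have "(\<Sum>n<N0. A n) \<ge> 0" unfolding A_def by (intro sum_nonneg) auto
      ultimately show ?thesis by linarith
    qed
    have B: "\<bar>ln (real N) / (2 * real N)\<bar> \<le> 1/2"
    proof -
      have "0 \<le> ln (real N)" "ln (real N) \<le> real N" using Np ln_le_minus_one[of "real N"] by auto
      then show ?thesis using Np by (simp add: divide_le_eq)
    qed
    have D: "\<bar>ln (sphere_area N * real N powr ((real N - 2) / 2)) / real N\<bar> \<le> 6"
      using area_bound[OF N] Np by (simp add: abs_div divide_le_eq)
    have "s N \<le> A N + \<bar>ln (real N) / (2 * real N)\<bar> + \<bar>ln (sphere_area N * real N powr ((real N - 2) / 2)) / real N\<bar>"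
      unfolding s_def A_def c_def by linarith
    then show ?thesis using AN B D unfolding M_def by linarith
  qed
  have bdd: "bdd_above S" unfolding Seq bdd_above_def using sbound by auto
  have sle: "s N \<le> Sup S" if "N \<ge> 1" for N
    using bdd that unfolding Seq by (intro cSup_upper) auto
  have Sge: "Sup S \<ge> 0" using sle[of 1] unfolding s_def by simp
  define M1 where "M1 = max \<bar>ln C1\<bar> \<bar>ln C2\<bar>"
  define A2 where "A2 = max a1 a2"
  have Cpos: "M1 + A2 + Sup S > 0" unfolding M1_def A2_def using assms(3) Sge by linarith
  have fpos: "f v > 0" for v using assms(5,7) by (meson exp_gt_zero mult_pos_pos order_less_le_trans)
  have lnf: "ln C1 - a1 * v\<^sup>2 \<le> ln (f v) \<and> ln (f v) \<le> ln C2 + a2 * v\<^sup>2" for v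
  proof -
    have "ln (C1 * exp (- a1 * v\<^sup>2)) \<le> ln (f v)" using assms(5,7) fpos[of v] by (subst ln_le_cancel_iff) auto
    moreover have "ln (f v) \<le> ln (C2 * exp (a2 * v\<^sup>2))" using assms(6,7) fpos[of v] by (subst ln_le_cancel_iff) auto
    ultimately show ?thesis using assms(5,6) by (simp add: ln_mult_pos)
  qed
  have main: "\<bar>ln (cond_tensor f N v)\<bar> \<le> (M1 + A2 + Sup S) * real N"
    if N: "N \<ge> 1" and v: "v \<in> sphereN N (sqrt (real N))" for N v
  proof -
    have Np: "real N \<ge> 1" using N by simp
    have "sqrt (\<Sum>i<N. (v i)\<^sup>2) = sqrt (real N)" using v unfolding sphereN_def eucl_norm_def by auto
    hence sq: "(\<Sum>i<N. (v i)\<^sup>2) = real N" by simp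
    have tp: "tensor N f v > 0" unfolding tensor_def using fpos by (intro prod_pos) auto
    have lt: "ln (tensor N f v) = (\<Sum>i<N. ln (f (v i)))" unfolding tensor_def
      using fpos by (subst ln_prod) (auto simp: less_imp_neq[symmetric])
    have "(\<Sum>i<N. ln (f (v i))) \<le> (\<Sum>i<N. ln C2 + a2 * (v i)\<^sup>2)" using lnf by (intro sum_mono) auto
    also have "\<dots> = real N * ln C2 + a2 * real N" using sq by (simp add: sum.distrib sum_distrib_left[symmetric])
    finally have u: "ln (tensor N f v) \<le> real N * ln C2 + a2 * real N" using lt by simp
    have "(\<Sum>i<N. ln C1 - a1 * (v i)\<^sup>2) \<le> (\<Sum>i<N. ln (f (v i)))" using lnf by (intro sum_mono) auto
    moreover have "(\<Sum>i<N. ln C1 - a1 * (v i)\<^sup>2) = real N * ln C1 - a1 * real N"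
      using sq by (simp add: sum_subtractf sum_distrib_left[symmetric])
    ultimately have l: "real N * ln C1 - a1 * real N \<le> ln (tensor N f v)" using lt by simp
    have "real N * ln C2 \<le> real N * M1" using Np unfolding M1_def by (intro mult_left_mono) auto
    moreover have "real N * ln C1 \<ge> - (real N * M1)"
    proof -
      have "real N * (- ln C1) \<le> real N * M1" using Np unfolding M1_def
        by (intro mult_left_mono) auto
      thus ?thesis by simp
    qed
    moreover have "a2 * real N \<le> A2 * real N" "a1 * real N \<le> A2 * real N"
      using Np unfolding A2_def by (intro mult_right_mono; auto)+
    ultimately have T: "\<bar>ln (tensor N f v)\<bar> \<le> (M1 + A2) * real N" using u l by (simp add: algebra_simps abs_le_iff)
    define Z where "Z = ZN N f (sqrt (real N))"
    have Z0: "Z \<ge> 0" unfolding Z_def ZN_def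
      by (intro integral_nonneg_AE) (auto simp: tensor_def intro!: AE_I2 prod_nonneg less_imp_le fpos prod_pos)
    define P where "P = sqrt (real N) * sphere_area N * real N powr ((real N - 2) / 2)"
    have Zf: "Z = 2 / P * (c + lam N (real N))"
      unfolding Z_def P_def using gc(1) gc(2) N Np by (simp add: c_def)
    have Ap: "sphere_area N > 0" unfolding sphere_area_def using Np by simp
    have Pp: "P > 0" unfolding P_def using Np Ap by simp
    show ?thesis
    proof (cases "Z = 0")
      case True
      then show ?thesis using Cpos Np unfolding cond_tensor_def Z_def[symmetric]
        by simp
    next
      case False
      hence Zp: "Z > 0" using Z0 by simp
      have "2 / P > 0" using Pp by simp
      hence "c + lam N (real N) > 0" using Zp Zf zero_less_mult_iff[of "2/P" "c + lam N (real N)"] by auto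
      hence cl: "2 * c + 2 * lam N (real N) > 0" by linarith
      have "Z = (2 * c + 2 * lam N (real N)) / P" using Zf by (simp add: add_divide_distrib)
      hence "ln Z = ln (2 * c + 2 * lam N (real N)) - ln P"
        using cl Pp by (simp only: ln_divide_pos)
      also have "ln P = ln (real N) / 2 + ln (sphere_area N * real N powr ((real N - 2) / 2))"
        unfolding P_def using Np Ap by (simp add: ln_mult_pos ln_sqrt mult.assoc)
      finally have lz: "ln Z = ln (2 * c + 2 * lam N (real N)) - (ln (real N) / 2 + ln (sphere_area N * real N powr ((real N - 2) / 2)))" .
      have e: "\<And>a b d. real N * (a / real N - b / (2 * real N) - d / real N) = a - b / 2 - d"
        using Np by (simp add: field_simps)
      have "ln Z = real N * (ln (2 * c + 2 * lam N (real N)) / real N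
                  - ln (real N) / (2 * real N)
                  - ln (sphere_area N * real N powr ((real N - 2) / 2)) / real N)"
        unfolding e lz by simp
      hence "\<bar>ln Z\<bar> = real N * s N" unfolding s_def c_def using Np by (simp add: abs_mult)
      also have "\<dots> \<le> real N * Sup S" using sle[OF N] Np by (intro mult_left_mono) auto
      finally have lZ: "\<bar>ln Z\<bar> \<le> Sup S * real N" by (simp add: mult.commute)
      have "ln (cond_tensor f N v) = ln (tensor N f v) - ln Z"
        unfolding cond_tensor_def Z_def[symmetric] using tp Zp by (simp add: ln_divide_pos)
      then show ?thesis using T lZ by (simp add: algebra_simps)
    qed
  qed
  show ?thesis using bdd main Cpos unfolding log_scalable_def M1_def A2_def by auto
qed

end
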